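(* Let $G=(V,E)$ be a connected undirected graph with positive edge weights $w$, and run the distributed algorithm described in the context synchronously at every node. Then for every node $v\in V$ and every node $t\in V$: at any time after the first $\mathrm{maxhop}(v,t)+1$ phases have been completed, the variable $\mathrm{NH}[t]$ at $v$ equals $\mathsf{NH}_v(t)$; and at any time after the first $\mathcal{D}(G)+2$ phases have been completed, the variable $\mathrm{PH}[t]$ at $v$ equals $\mathsf{PH}_v(t)$.
   Context: Graph notions. $G=(V,E)$ is connected, undirected, with weights $w(e)>0$; $N(v)$ is the set of neighbors of $v$ and $N[v]=N(v)\cup\{v\}$. The length of a path is the sum of its edge weights; $\mathrm{dist}(s,t)$ is the length of a shortest $s$–$t$ path. For $s\neq t$, $\mathrm{maxhop}(s,t)$ is the maximum number of edges of a shortest (minimum-length) $s$–$t$ path, $\mathrm{maxhop}(s,s)=0$, and $\mathcal{D}(G)=\max_{s,t\in V}\mathrm{maxhop}(s,t)$. $\mathsf{NH}_v(t)$ is the set of neighbors of $v$ that lie on some shortest path from $v$ to $t$; $\mathsf{PH}_v(s)$ is the set of neighbors $u$ of $v$ such that $v$ lies on some shortest path from $s$ to $u$. Algorithm (at each node $v$). Initialization: for all $t\in V$: $D[t]=+\infty$, $\mathrm{NH}[t]=\mathrm{PH}[t]=\emptyset$, and for all $u\in N[v]$: $B[u,t]=0$, $S[u,t]=0$; then $S[v,v]=1$, $D[v]=0$. Execution proceeds in synchronous phases; in each phase every node $v$ sends, for every $t\in V$, the message $(t,D[t],S[v,t],B[v,t])$ to every neighbor, receives all messages sent to it by its neighbors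 in that phase, and processes each of them (in arbitrary order) as follows. On receipt of $(t,d,s,b)$ from $u\in N(v)$: remove $u$ from $\mathrm{NH}[t]$ and from $\mathrm{PH}[t]$; if $d+w(\{u,v\})<D[t]$ set $D[t]\leftarrow d+w(\{u,v\})$; else if $d+w(\{u,v\})=D[t]$ add $u$ to $\mathrm{NH}[t]$; else if $d-w(\{u,v\})=D[t]$ add $u$ to $\mathrm{PH}[t]$. Then set $S[u,t]\leftarrow s$, $B[u,t]\leftarrow b$; if $t\neq v$ set $S[v,t]\leftarrow\sum_{x\in\mathrm{NH}[t]}S[x,t]$; set $B[v,t]\leftarrow S[v,t]\cdot\sum_{x\in\mathrm{PH}[t]}\frac{B[x,t]+1}{S[x,t]}$ (a term with $S[x,t]=0$ is taken as $0$); finally set $C\leftarrow\sum_{x\neq v}B[v,x]$. *)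

theory Defs
  imports Main "HOL-Library.Extended_Real"
begin

definition wf_graph :: "'a set \<Rightarrow> 'a set set \<Rightarrow> bool" where
  "wf_graph V E \<longleftrightarrow> finite V \<and> (\<forall>e\<in>E. e \<subseteq> V \<and> card e = 2)"

definition nbrs :: "'a set set \<Rightarrow> 'a \<Rightarrow> 'a set" where
  "nbrs E v = {u. {u, v} \<in> E}"

fun is_walk :: "'a set \<Rightarrow> 'a set set \<Rightarrow> 'a list \<Rightarrow> bool" where
  "is_walk V E [] = False"
| "is_walk V E [x] = (x \<in> V)"
| "is_walk V E (x # y # r) = ({x, y} \<in> E \<and> is_walk V E (y # r))"

definition is_path :: "'a set \<Rightarrow> 'a set set \<Rightarrow> 'a list \<Rightarrow> bool" where
  "is_path V E p \<longleftrightarrow> is_walk V E p \<and> distinct p"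

definition paths_between :: "'a set \<Rightarrow> 'a set set \<Rightarrow> 'a \<Rightarrow> 'a \<Rightarrow> 'a list set" where
  "paths_between V E s t = {p. is_path V E p \<and> hd p = s \<and> last p = t}"

fun wlen :: "('a set \<Rightarrow> real) \<Rightarrow> 'a list \<Rightarrow> real" where
  "wlen w [] = 0"
| "wlen w [x] = 0"
| "wlen w (x # y # r) = w {x, y} + wlen w (y # r)"

definition connected_graph :: "'a set \<Rightarrow> 'a set set \<Rightarrow> bool" where
  "connected_graph V E \<longleftrightarrow> V \<noteq> {} \<and> (\<forall>s\<in>V. \<forall>t\<in>V. paths_between V E s t \<noteq> {})"

definition dist :: "'a set \<Rightarrow> 'a set set \<Rightarrow> ('a set \<Rightarrow> real) \<Rightarrow> 'a \<Rightarrow> 'a \<Rightarrow> real" where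
  "dist V E w s t = Min (wlen w ` paths_between V E s t)"

definition shortest_paths :: "'a set \<Rightarrow> 'a set set \<Rightarrow> ('a set \<Rightarrow> real) \<Rightarrow> 'a \<Rightarrow> 'a \<Rightarrow> 'a list set" where
  "shortest_paths V E w s t = {p \<in> paths_between V E s t. wlen w p = dist V E w s t}"

definition maxhop :: "'a set \<Rightarrow> 'a set set \<Rightarrow> ('a set \<Rightarrow> real) \<Rightarrow> 'a \<Rightarrow> 'a \<Rightarrow> nat" where
  "maxhop V E w s t = (if s = t then 0
      else Max ((\<lambda>p. length p - 1) ` shortest_paths V E w s t))"

definition hopdiam :: "'a set \<Rightarrow> 'a set set \<Rightarrow> ('a set \<Rightarrow> real) \<Rightarrow> nat" where
  "hopdiam V E w = Max {maxhop V E w s t | s t. s \<in> V \<and> t \<in> V}"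

definition NHset :: "'a set \<Rightarrow> 'a set set \<Rightarrow> ('a set \<Rightarrow> real) \<Rightarrow> 'a \<Rightarrow> 'a \<Rightarrow> 'a set" where
  "NHset V E w v t = {u \<in> nbrs E v. \<exists>r. v # u # r \<in> shortest_paths V E w v t}"

definition PHset :: "'a set \<Rightarrow> 'a set set \<Rightarrow> ('a set \<Rightarrow> real) \<Rightarrow> 'a \<Rightarrow> 'a \<Rightarrow> 'a set" where
  "PHset V E w v s = {u \<in> nbrs E v. \<exists>r. r @ [v, u] \<in> shortest_paths V E w s u}"

record 'a nstate =
  Dv  :: "'a \<Rightarrow> ereal"
  NHv :: "'a \<Rightarrow> 'a set"
  PHv :: "'a \<Rightarrow> 'a set"
  Sv  :: "'a \<Rightarrow> 'a \<Rightarrow> real"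
  Bv  :: "'a \<Rightarrow> 'a \<Rightarrow> real"
  Cv  :: real

definition init_state :: "'a \<Rightarrow> 'a nstate" where
  "init_state v = \<lparr> Dv = (\<lambda>t. \<infinity>)(v := 0), NHv = (\<lambda>t. {}), PHv = (\<lambda>t. {}),
      Sv = (\<lambda>u t. 0)(v := (\<lambda>t. 0)(v := 1)), Bv = (\<lambda>u t. 0), Cv = 0 \<rparr>"

definition process ::
  "'a set \<Rightarrow> ('a set \<Rightarrow> real) \<Rightarrow> 'a \<Rightarrow> 'a \<times> 'a \<times> ereal \<times> real \<times> real \<Rightarrow> 'a nstate \<Rightarrow> 'a nstate" where
  "process V w v msg st = (case msg of (u, t, d, s, b) \<Rightarrow>
     let wu = ereal (w {u, v});
         NH0 = (NHv st)(t := NHv st t - {u});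
         PH0 = (PHv st)(t := PHv st t - {u});
         (D1, NH1, PH1) =
           (if d + wu < Dv st t then ((Dv st)(t := d + wu), NH0, PH0)
            else if d + wu = Dv st t then (Dv st, NH0(t := insert u (NH0 t)), PH0)
            else if d - wu = Dv st t then (Dv st, NH0, PH0(t := insert u (PH0 t)))
            else (Dv st, NH0, PH0));
         S1 = (Sv st)(u := (Sv st u)(t := s));
         B1 = (Bv st)(u := (Bv st u)(t := b));
         S2 = (if t \<noteq> v then S1(v := (S1 v)(t := (\<Sum>x\<in>NH1 t. S1 x t))) else S1);
         B2 = B1(v := (B1 v)(t := S2 v t * (\<Sum>x\<in>PH1 t. (B1 x t + 1) / S2 x t)));
         C2 = (\<Sum>x\<in>V - {v}. B2 v x)
     in \<lparr> Dv = D1, NHv = NH1, PHv = PH1, Sv = S2, Bv = B2, Cv = C2 \<rparr>)"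

text \<open>Message sent by u about destination t, computed from u's state at the start of the phase.
  (Division by S[x,t] = 0 yields 0 in Isabelle, matching the convention.)\<close>
definition msg_of :: "('a \<Rightarrow> 'a nstate) \<Rightarrow> 'a \<times> 'a \<Rightarrow> 'a \<times> 'a \<times> ereal \<times> real \<times> real" where
  "msg_of \<sigma> ut = (case ut of (u, t) \<Rightarrow> (u, t, Dv (\<sigma> u) t, Sv (\<sigma> u) u t, Bv (\<sigma> u) u t))"

text \<open>ord k v: the (arbitrary) order in which node v processes, in phase k+1,
  the messages (one per neighbour u and destination t, identified by (u,t)).\<close>
definition valid_order :: "'a set \<Rightarrow> 'a set set \<Rightarrow> (nat \<Rightarrow> 'a \<Rightarrow> ('a \<times> 'a) list) \<Rightarrow> bool" where
  "valid_order V E ord \<longleftrightarrow>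
     (\<forall>k. \<forall>v\<in>V. distinct (ord k v) \<and> set (ord k v) = nbrs E v \<times> V)"

fun run :: "'a set \<Rightarrow> ('a set \<Rightarrow> real) \<Rightarrow> (nat \<Rightarrow> 'a \<Rightarrow> ('a \<times> 'a) list) \<Rightarrow> nat \<Rightarrow> 'a \<Rightarrow> 'a nstate" where
  "run V w ord 0 = init_state"
| "run V w ord (Suc k) = (\<lambda>v. fold (process V w v) (map (msg_of (run V w ord k)) (ord k v))
                                  (run V w ord k v))"

text \<open>State of node v after k complete phases and the first i messages of phase k+1 processed.\<close>
definition state_at :: "'a set \<Rightarrow> ('a set \<Rightarrow> real) \<Rightarrow> (nat \<Rightarrow> 'a \<Rightarrow> ('a \<times> 'a) list) \<Rightarrow> nat \<Rightarrow> nat \<Rightarrow> 'a \<Rightarrow> 'a nstate" where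
  "state_at V w ord k i v = fold (process V w v) (map (msg_of (run V w ord k)) (take i (ord k v)))
                                  (run V w ord k v)"

end

theory Submission
  imports Defs
begin

lemma proc_D: "Dv (process V w v (u,t',d,s,b) st) t =
  (if t = t' \<and> d + ereal (w{u,v}) < Dv st t then d + ereal (w{u,v}) else Dv st t)"
  by (simp add: process_def Let_def)

lemma proc_NH: "NHv (process V w v (u,t',d,s,b) st) t =
  (if t = t' then (if d + ereal (w{u,v}) < Dv st t then NHv st t - {u}
     else if d + ereal (w{u,v}) = Dv st t then insert u (NHv st t - {u}) else NHv st t - {u})
   else NHv st t)"
  by (simp add: process_def Let_def)

lemma proc_PH: "PHv (process V w v (u,t',d,s,b) st) t =
  (if t = t' then (if d + ereal (w{u,v}) < Dv st t then PHv st t - {u}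
     else if d + ereal (w{u,v}) = Dv st t then PHv st t - {u}
     else if d - ereal (w{u,v}) = Dv st t then insert u (PHv st t - {u}) else PHv st t - {u})
   else PHv st t)"
  by (simp add: process_def Let_def)

lemma fold_D_le_init: "Dv (fold (process V w v) (map (msg_of \<sigma>) L) st) t \<le> Dv st t"
proof (induction L arbitrary: st)
  case Nil then show ?case by simp
next
  case (Cons x L)
  obtain u t' where x: "x = (u,t')" by force
  have "Dv (process V w v (msg_of \<sigma> x) st) t \<le> Dv st t"
    by (auto simp add: x msg_of_def proc_D intro: less_imp_le)
  then show ?case using Cons[of "process V w v (msg_of \<sigma> x) st"] by simp
qed

lemma fold_D_le_msg: "(u,t) \<in> set L \<Longrightarrow>
   Dv (fold (process V w v) (map (msg_of \<sigma>) L) st) t \<le> Dv (\<sigma> u) t + ereal (w{u,v})"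
proof (induction L arbitrary: st)
  case Nil then show ?case by simp
next
  case (Cons x L)
  obtain u' t' where x: "x = (u',t')" by force
  show ?case
  proof (cases "(u,t) \<in> set L")
    case True then show ?thesis using Cons by simp
  next
    case False
    then have "x = (u,t)" using Cons by auto
    then have "Dv (process V w v (msg_of \<sigma> x) st) t \<le> Dv (\<sigma> u) t + ereal (w{u,v})"
      by (auto simp add: msg_of_def proc_D not_less)
    then show ?thesis using fold_D_le_init[of V w v \<sigma> L "process V w v (msg_of \<sigma> x) st" t]
      by simp
  qed
qed

lemma fold_D_ge: "L0 \<le> Dv st t \<Longrightarrow> (\<forall>(u,t')\<in>set L. t' = t \<longrightarrow> L0 \<le> Dv (\<sigma> u) t + ereal (w{u,v})) \<Longrightarrow>
   L0 \<le> Dv (fold (process V w v) (map (msg_of \<sigma>) L) st) t"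
proof (induction L arbitrary: st)
  case Nil then show ?case by simp
next
  case (Cons x L)
  obtain u t' where x: "x = (u,t')" by force
  have "L0 \<le> Dv (process V w v (msg_of \<sigma> x) st) t"
    using Cons.prems by (auto simp add: x msg_of_def proc_D)
  then show ?case using Cons by simp
qed

lemma fold_phase:
  assumes "Dv st t = \<delta>" "\<forall>(u,t')\<in>set L. t' = t \<longrightarrow> \<delta> \<le> Dv (\<sigma> u) t + ereal (w{u,v})"
  shows "Dv (fold (process V w v) (map (msg_of \<sigma>) L) st) t = \<delta> \<and>
    NHv (fold (process V w v) (map (msg_of \<sigma>) L) st) t =
      (NHv st t - {u. (u,t) \<in> set L}) \<union> {u. (u,t) \<in> set L \<and> Dv (\<sigma> u) t + ereal (w{u,v}) = \<delta>} \<and>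
    PHv (fold (process V w v) (map (msg_of \<sigma>) L) st) t =
      (PHv st t - {u. (u,t) \<in> set L}) \<union> {u. (u,t) \<in> set L \<and> Dv (\<sigma> u) t + ereal (w{u,v}) \<noteq> \<delta>
          \<and> Dv (\<sigma> u) t - ereal (w{u,v}) = \<delta>}"
  using assms
proof (induction L arbitrary: st)
  case Nil then show ?case by simp
next
  case (Cons x L)
  obtain u t' where x: "x = (u,t')" by force
  let ?st = "process V w v (msg_of \<sigma> x) st"
  have D: "Dv ?st t = \<delta>"
    using Cons.prems by (auto simp add: x msg_of_def proc_D)
  have IH: "Dv (fold (process V w v) (map (msg_of \<sigma>) L) ?st) t = \<delta> \<and>
    NHv (fold (process V w v) (map (msg_of \<sigma>) L) ?st) t =
      (NHv ?st t - {u. (u,t) \<in> set L}) \<union> {u. (u,t) \<in> set L \<and> Dv (\<sigma> u) t + ereal (w{u,v}) = \<delta>} \<and>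
    PHv (fold (process V w v) (map (msg_of \<sigma>) L) ?st) t =
      (PHv ?st t - {u. (u,t) \<in> set L}) \<union> {u. (u,t) \<in> set L \<and> Dv (\<sigma> u) t + ereal (w{u,v}) \<noteq> \<delta>
          \<and> Dv (\<sigma> u) t - ereal (w{u,v}) = \<delta>}"
    using Cons.IH[OF D] Cons.prems(2) by auto
  have ge: "t' = t \<Longrightarrow> \<delta> \<le> Dv (\<sigma> u) t + ereal (w{u,v})" using Cons.prems(2) x by auto
  have NH1: "NHv ?st t = (if t' = t then (NHv st t - {u}) \<union> {u'. u' = u \<and> Dv (\<sigma> u) t + ereal (w{u,v}) = \<delta>} else NHv st t)"
    using ge Cons.prems(1) by (auto simp add: x msg_of_def proc_NH)
  have PH1: "PHv ?st t = (if t' = t then (PHv st t - {u}) \<union> {u'. u' = u \<and> Dv (\<sigma> u) t + ereal (w{u,v}) \<noteq> \<delta>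
          \<and> Dv (\<sigma> u) t - ereal (w{u,v}) = \<delta>} else PHv st t)"
    using ge Cons.prems(1) by (auto simp add: x msg_of_def proc_PH)
  show ?case using IH NH1 PH1 x by auto
qed

locale G =
  fixes V :: "'a set" and E :: "'a set set" and w :: "'a set \<Rightarrow> real"
  assumes wf: "wf_graph V E" and conn: "connected_graph V E" and wpos: "\<forall>e\<in>E. w e > 0"
begin

lemma edge_V: "{x, y} \<in> E \<Longrightarrow> x \<in> V \<and> y \<in> V"
  using wf unfolding wf_graph_def by blast

lemma finV: "finite V" using wf unfolding wf_graph_def by blast

end


lemma (in G) walk_app: "is_walk V E (xs @ y # ys) \<longleftrightarrow> is_walk V E (xs @ [y]) \<and> is_walk V E (y # ys)"
proof (induction xs)
  case Nil then show ?case by (cases ys) (auto dest: edge_V)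
next
  case (Cons x xs) then show ?case by (cases xs) auto
qed

lemma wlen_app: "wlen w (xs @ y # ys) = wlen w (xs @ [y]) + wlen w (y # ys)"
proof (induction xs)
  case Nil then show ?case by simp
next
  case (Cons x xs) then show ?case by (cases xs) auto
qed

lemma (in G) walk_rev: "is_walk V E p \<Longrightarrow> is_walk V E (rev p)"
proof (induction p)
  case Nil then show ?case by simp
next
  case (Cons x p)
  show ?case
  proof (cases p)
    case Nil then show ?thesis using Cons by simp
  next
    case (Cons y r)
    then have "is_walk V E (rev r @ [y])" using Cons.IH Cons.prems by simp
    moreover have "is_walk V E [y, x]" using Cons.prems \<open>p = y # r\<close>
      by (simp add: insert_commute) (auto dest: edge_V)
    ultimately show ?thesis using walk_app[of "rev r" y "[x]"] \<open>p = y # r\<close> by simp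
  qed
qed

lemma wlen_rev: "wlen w (rev p) = wlen w p"
proof (induction w p rule: wlen.induct)
  case (3 w x y r)
  have "wlen w (rev (x # y # r)) = wlen w (rev r @ [y]) + wlen w [y, x]"
    using wlen_app[of w "rev r" y "[x]"] by simp
  then show ?case using 3 by (simp add: insert_commute)
qed auto

lemma walk_nonempty: "is_walk V E p \<Longrightarrow> p \<noteq> []" by auto

lemma (in G) walk_set: "is_walk V E p \<Longrightarrow> set p \<subseteq> V"
proof (induction p)
  case (Cons x p) then show ?case by (cases p) (auto dest: edge_V)
qed simp

lemma (in G) paths_rev: "p \<in> paths_between V E s t \<Longrightarrow> rev p \<in> paths_between V E t s"
  unfolding paths_between_def is_path_def
  using walk_rev walk_nonempty by (auto simp: hd_rev last_rev)

lemma (in G) paths_rev_eq: "paths_between V E t s = rev ` paths_between V E s t"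
proof (intro equalityI subsetI)
  fix p assume "p \<in> paths_between V E t s"
  then have "rev p \<in> paths_between V E s t" by (rule paths_rev)
  then show "p \<in> rev ` paths_between V E s t" by (rule rev_image_eqI) simp
next
  fix p assume "p \<in> rev ` paths_between V E s t"
  then obtain q where "q \<in> paths_between V E s t" "p = rev q" by blast
  then show "p \<in> paths_between V E t s" using paths_rev by blast
qed

lemma (in G) dist_sym: "dist V E w t s = dist V E w s t"
proof -
  have "wlen w ` paths_between V E t s = wlen w ` paths_between V E s t"
    using paths_rev_eq[of t s] by (simp add: image_image wlen_rev)
  then show ?thesis unfolding dist_def by simp
qed

lemma (in G) finite_paths: "finite (paths_between V E s t)"
  apply (rule finite_subset[OF _ finite_subset_distinct[OF finV]])
  using walk_set unfolding paths_between_def is_path_def by auto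

lemma wlen_nonneg: "\<forall>e\<in>E. w e > 0 \<Longrightarrow> is_walk V E p \<Longrightarrow> wlen w p \<ge> 0"
proof (induction p rule: is_walk.induct)
  case (3 V E x y r) then show ?case by (simp add: add_nonneg_nonneg less_imp_le)
qed auto

lemma wlen_pos: "\<forall>e\<in>E. w e > 0 \<Longrightarrow> is_walk V E (x # y # r) \<Longrightarrow> wlen w (x # y # r) > 0"
  using wlen_nonneg[of E w V "y # r"] by (simp add: add_pos_nonneg)

lemma path_same: "p \<in> paths_between V E t t \<Longrightarrow> p = [t]"
proof -
  assume p: "p \<in> paths_between V E t t"
  then obtain x q where pq: "p = x # q" unfolding paths_between_def is_path_def
    by (cases p) auto
  have "q = []"
  proof (rule ccontr)
    assume "q \<noteq> []"
    then have "last p \<in> set q" using pq by simp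
    moreover have "hd p = last p" using p unfolding paths_between_def by simp
    ultimately show False using p pq unfolding paths_between_def is_path_def by simp
  qed
  then show ?thesis using p pq unfolding paths_between_def by simp
qed

context G begin

lemma paths_ne: "s \<in> V \<Longrightarrow> t \<in> V \<Longrightarrow> paths_between V E s t \<noteq> {}"
  using conn unfolding connected_graph_def by blast

lemma dist_le: "p \<in> paths_between V E s t \<Longrightarrow> dist V E w s t \<le> wlen w p"
  unfolding dist_def using finite_paths by (intro Min_le) auto

lemma dist_attained: "s \<in> V \<Longrightarrow> t \<in> V \<Longrightarrow> \<exists>p\<in>paths_between V E s t. wlen w p = dist V E w s t"
proof -
  assume "s \<in> V" "t \<in> V"
  then have "dist V E w s t \<in> wlen w ` paths_between V E s t"
    unfolding dist_def using finite_paths paths_ne by (intro Min_in) auto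
  then show ?thesis by auto
qed

lemma sp_ex: "s \<in> V \<Longrightarrow> t \<in> V \<Longrightarrow> \<exists>p. p \<in> shortest_paths V E w s t"
  using dist_attained unfolding shortest_paths_def by blast

lemma wlen_path_nonneg: "p \<in> paths_between V E s t \<Longrightarrow> 0 \<le> wlen w p"
  using wlen_nonneg[OF wpos] unfolding paths_between_def is_path_def by blast

lemma dist_nonneg: "s \<in> V \<Longrightarrow> t \<in> V \<Longrightarrow> 0 \<le> dist V E w s t"
  using dist_attained wlen_path_nonneg by metis

lemma dist_self: "t \<in> V \<Longrightarrow> dist V E w t t = 0"
proof -
  assume t: "t \<in> V"
  have "[t] \<in> paths_between V E t t" using t unfolding paths_between_def is_path_def by simp
  then have "dist V E w t t \<le> 0" using dist_le by fastforce
  then show ?thesis using dist_nonneg[OF t t] by simp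
qed

lemma sp_hop: "p \<in> shortest_paths V E w v t \<Longrightarrow> length p - 1 \<le> maxhop V E w v t"
proof (cases "v = t")
  case True
  assume "p \<in> shortest_paths V E w v t"
  then have "p \<in> paths_between V E t t" using True unfolding shortest_paths_def by simp
  then have "p = [t]" by (rule path_same)
  then show ?thesis by simp
next
  case False
  assume p: "p \<in> shortest_paths V E w v t"
  have "shortest_paths V E w v t \<subseteq> paths_between V E v t" unfolding shortest_paths_def by blast
  then have "finite (shortest_paths V E w v t)"
    using finite_paths by (rule finite_subset)
  then have "length p - 1 \<le> Max ((\<lambda>p. length p - 1) ` shortest_paths V E w v t)"
    using p by (intro Max_ge) auto
  then show ?thesis unfolding maxhop_def using False by simp
qed

lemma maxhop_diam: "s \<in> V \<Longrightarrow> t \<in> V \<Longrightarrow> maxhop V E w s t \<le> hopdiam V E w"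
proof -
  assume "s \<in> V" "t \<in> V"
  moreover have "{maxhop V E w s t | s t. s \<in> V \<and> t \<in> V} = (\<lambda>(s,t). maxhop V E w s t) ` (V \<times> V)"
    by auto
  moreover have "finite (V \<times> V)" using finV by simp
  ultimately show ?thesis unfolding hopdiam_def by (metis (mono_tags, lifting) Max_ge finite_imageI mem_Collect_eq)
qed

lemma wlen_pos_app: "is_walk V E (xs @ [y]) \<Longrightarrow> xs \<noteq> [] \<Longrightarrow> wlen w (xs @ [y]) > 0"
proof -
  assume h: "is_walk V E (xs @ [y])" "xs \<noteq> []"
  then obtain x xs' where "xs = x # xs'" by (cases xs) auto
  moreover obtain z zs where "xs' @ [y] = z # zs" by (cases "xs' @ [y]") auto
  ultimately have "xs @ [y] = x # z # zs" by simp
  then show ?thesis using h(1) wlen_pos[OF wpos, of V x z zs] by simp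
qed

lemma split_path:
  assumes q: "q \<in> paths_between V E u t" and v: "v \<in> set q"
  obtains a b where "q = a @ v # b" "v # b \<in> paths_between V E v t"
    "a @ [v] \<in> paths_between V E u v"
    "wlen w q = wlen w (a @ [v]) + wlen w (v # b)"
proof -
  obtain a b where qab: "q = a @ v # b" using split_list[OF v] by blast
  have wq: "is_walk V E (a @ [v])" "is_walk V E (v # b)"
    using q qab walk_app[of a v b] unfolding paths_between_def is_path_def by simp_all
  have dq: "distinct (a @ [v])" "distinct (v # b)"
    using q qab unfolding paths_between_def is_path_def by auto
  have "v # b \<in> paths_between V E v t"
    using wq dq q qab unfolding paths_between_def is_path_def by auto
  moreover have "a @ [v] \<in> paths_between V E u v"
    using wq dq q qab unfolding paths_between_def is_path_def by (cases a) auto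
  ultimately show ?thesis using that[OF qab] wlen_app[of w a v b] qab by simp
qed

lemma tri:
  assumes e: "{u, v} \<in> E" and t: "t \<in> V"
  shows "dist V E w v t \<le> w {u, v} + dist V E w u t"
proof -
  have uv: "u \<in> V" "v \<in> V" using edge_V[OF e] by auto
  have wp: "w {u, v} > 0" using wpos e by auto
  obtain q where q: "q \<in> paths_between V E u t" "wlen w q = dist V E w u t"
    using dist_attained[OF uv(1) t] by blast
  show ?thesis
  proof (cases "v \<in> set q")
    case True
    obtain a b where ab: "v # b \<in> paths_between V E v t" "a @ [v] \<in> paths_between V E u v"
      "wlen w q = wlen w (a @ [v]) + wlen w (v # b)"
      using split_path[OF q(1) True] .
    have "dist V E w v t \<le> wlen w (v # b)" using dist_le[OF ab(1)] .
    moreover have "0 \<le> wlen w (a @ [v])" using wlen_path_nonneg[OF ab(2)] .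
    ultimately show ?thesis using ab(3) q(2) wp by linarith
  next
    case False
    obtain r where qr: "q = u # r" using q unfolding paths_between_def is_path_def
      by (cases q) auto
    have e': "{v, u} \<in> E" using e by (simp add: insert_commute)
    have "v # q \<in> paths_between V E v t"
      using q False e' qr unfolding paths_between_def is_path_def by simp
    then have "dist V E w v t \<le> wlen w (v # q)" by (rule dist_le)
    moreover have "wlen w (v # q) = w {u, v} + wlen w q" using qr by (simp add: insert_commute)
    ultimately show ?thesis using q by simp
  qed
qed

lemma nh_tail:
  assumes "v # u # r \<in> shortest_paths V E w v t"
  shows "u # r \<in> paths_between V E u t" "wlen w (u # r) = dist V E w u t"
    "dist V E w u t + w {u, v} = dist V E w v t"
proof -
  have p: "v # u # r \<in> paths_between V E v t" "wlen w (v # u # r) = dist V E w v t"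
    using assms unfolding shortest_paths_def by auto
  show ur: "u # r \<in> paths_between V E u t"
    using p unfolding paths_between_def is_path_def by auto
  have e0: "{v, u} \<in> E" using p unfolding paths_between_def is_path_def by simp
  then have e: "{u, v} \<in> E" by (simp add: insert_commute)
  have ws: "set (v # u # r) \<subseteq> V" using p walk_set unfolding paths_between_def is_path_def by blast
  have "last (v # u # r) = t" using p unfolding paths_between_def by simp
  then have t: "t \<in> V" using ws last_in_set[of "v # u # r"] by auto
  have "dist V E w u t \<le> wlen w (u # r)" using dist_le[OF ur] .
  moreover have "dist V E w v t \<le> w {u, v} + dist V E w u t" using tri[OF e t] .
  moreover have "wlen w (v # u # r) = w {u, v} + wlen w (u # r)" by (simp add: insert_commute)
  ultimately show "wlen w (u # r) = dist V E w u t" "dist V E w u t + w {u, v} = dist V E w v t"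
    using p by linarith+
qed

lemma nh_char:
  assumes e: "{u, v} \<in> E" and t: "t \<in> V"
  shows "(\<exists>r. v # u # r \<in> shortest_paths V E w v t) \<longleftrightarrow> dist V E w u t + w {u, v} = dist V E w v t"
proof
  assume "\<exists>r. v # u # r \<in> shortest_paths V E w v t"
  then show "dist V E w u t + w {u, v} = dist V E w v t" using nh_tail by blast
next
  assume d: "dist V E w u t + w {u, v} = dist V E w v t"
  have uv: "u \<in> V" "v \<in> V" using edge_V[OF e] by auto
  have wp: "w {u, v} > 0" using wpos e by auto
  have neq: "u \<noteq> v"
  proof
    assume "u = v"
    then have "card {u, v} = 1" by simp
    moreover have "card {u, v} = 2" using e wf unfolding wf_graph_def by blast
    ultimately show False by simp
  qed
  obtain q where q: "q \<in> paths_between V E u t" "wlen w q = dist V E w u t"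
    using dist_attained[OF uv(1) t] by blast
  obtain r where qr: "q = u # r" using q unfolding paths_between_def is_path_def
    by (cases q) auto
  have nv: "v \<notin> set q"
  proof
    assume "v \<in> set q"
    then obtain a b where ab: "q = a @ v # b" "v # b \<in> paths_between V E v t"
      "a @ [v] \<in> paths_between V E u v" "wlen w q = wlen w (a @ [v]) + wlen w (v # b)"
      using split_path[OF q(1) \<open>v \<in> set q\<close>] by blast
    have "a \<noteq> []" using ab(1) qr neq by (cases a) auto
    then have "wlen w (a @ [v]) > 0" using wlen_pos_app ab(3)
      unfolding paths_between_def is_path_def by blast
    moreover have "dist V E w v t \<le> wlen w (v # b)" using dist_le[OF ab(2)] .
    ultimately show False using ab(4) q(2) d wp by linarith
  qed
  have e': "{v, u} \<in> E" using e by (simp add: insert_commute)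
  have "v # q \<in> paths_between V E v t"
    using q nv e' qr unfolding paths_between_def is_path_def by simp
  moreover have "wlen w (v # q) = dist V E w v t" using q qr d by (simp add: insert_commute)
  ultimately show "\<exists>r. v # u # r \<in> shortest_paths V E w v t"
    unfolding shortest_paths_def using qr by auto
qed

lemma sp_rev: "p \<in> shortest_paths V E w s t \<Longrightarrow> rev p \<in> shortest_paths V E w t s"
  unfolding shortest_paths_def using paths_rev[of p s t] wlen_rev[of w p] dist_sym[of t s] by simp

lemma ph_char:
  assumes e: "{u, v} \<in> E" and t: "t \<in> V"
  shows "(\<exists>r. r @ [v, u] \<in> shortest_paths V E w t u) \<longleftrightarrow> dist V E w v t + w {u, v} = dist V E w u t"
proof -
  have e': "{v, u} \<in> E" using e by (simp add: insert_commute)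
  have "(\<exists>r. r @ [v, u] \<in> shortest_paths V E w t u) \<longleftrightarrow> (\<exists>r. u # v # r \<in> shortest_paths V E w u t)"
  proof
    assume "\<exists>r. r @ [v, u] \<in> shortest_paths V E w t u"
    then obtain r where "r @ [v, u] \<in> shortest_paths V E w t u" by blast
    from sp_rev[OF this] show "\<exists>r. u # v # r \<in> shortest_paths V E w u t" by auto
  next
    assume "\<exists>r. u # v # r \<in> shortest_paths V E w u t"
    then obtain r where "u # v # r \<in> shortest_paths V E w u t" by blast
    from sp_rev[OF this] show "\<exists>r. r @ [v, u] \<in> shortest_paths V E w t u" by auto
  qed
  also have "\<dots> \<longleftrightarrow> dist V E w v t + w {v, u} = dist V E w u t" by (rule nh_char[OF e' t])
  finally show ?thesis by (simp add: insert_commute)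
qed

end

locale G2 = G V E w for V :: "'a set" and E and w +
  fixes ord :: "nat \<Rightarrow> 'a \<Rightarrow> ('a \<times> 'a) list"
  assumes vo: "valid_order V E ord"
begin

lemma ord_set: "v \<in> V \<Longrightarrow> set (ord k v) = nbrs E v \<times> V"
  using vo unfolding valid_order_def by blast

lemma nbrs_iff: "u \<in> nbrs E v \<longleftrightarrow> {u, v} \<in> E"
  unfolding nbrs_def by simp

lemma D_init: "Dv (init_state v) t = (if t = v then 0 else \<infinity>)"
  unfolding init_state_def by simp

lemma D_lower: "t \<in> V \<Longrightarrow> v \<in> V \<Longrightarrow> ereal (dist V E w v t) \<le> Dv (run V w ord k v) t"
proof (induction k arbitrary: v)
  case 0
  then show ?case using dist_self by (simp add: D_init)
next
  case (Suc k)
  have msgs: "\<forall>(u, t')\<in>set (ord k v). t' = t \<longrightarrow>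
      ereal (dist V E w v t) \<le> Dv (run V w ord k u) t + ereal (w {u, v})"
  proof (intro ballI impI, clarify)
    fix u t' assume "(u, t) \<in> set (ord k v)"
    then have e: "{u, v} \<in> E" using ord_set[OF Suc.prems(2)] nbrs_iff by blast
    then have u: "u \<in> V" using edge_V by blast
    have "ereal (dist V E w v t) \<le> ereal (dist V E w u t) + ereal (w {u, v})"
      using tri[OF e Suc.prems(1)] by simp
    also have "\<dots> \<le> Dv (run V w ord k u) t + ereal (w {u, v})"
      using Suc.IH[OF Suc.prems(1) u] by (rule add_right_mono)
    finally show "ereal (dist V E w v t) \<le> Dv (run V w ord k u) t + ereal (w {u, v})" .
  qed
  show ?case using fold_D_ge[OF Suc.IH[OF Suc.prems] msgs] by simp
qed

lemma D_upper: "is_walk V E p \<Longrightarrow> last p = t \<Longrightarrow> length p \<le> Suc k \<Longrightarrow>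
    Dv (run V w ord k (hd p)) t \<le> ereal (wlen w p)"
proof (induction k arbitrary: p)
  case 0
  then obtain x where "p = [x]" by (cases p) auto
  then show ?case using 0 by (simp add: D_init)
next
  case (Suc k)
  obtain x q where p: "p = x # q" using Suc.prems by (cases p) auto
  show ?case
  proof (cases q)
    case Nil
    then have "x = t" using Suc.prems p by simp
    have "Dv (run V w ord (Suc k) x) t \<le> Dv (run V w ord k x) t"
      using fold_D_le_init by simp
    also have "\<dots> \<le> 0" using Suc.IH[of "[x]"] Suc.prems p Nil by (simp add: zero_ereal_def)
    finally show ?thesis using p Nil by (simp add: zero_ereal_def)
  next
    case (Cons y r)
    have e: "{x, y} \<in> E" and wy: "is_walk V E (y # r)" using Suc.prems p Cons by auto
    have e': "{y, x} \<in> E" using e by (simp add: insert_commute)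
    have x: "x \<in> V" using edge_V[OF e] by blast
    have "t \<in> V" using walk_set[OF wy] Suc.prems p Cons last_in_set[of "y # r"] by auto
    then have yt: "(y, t) \<in> set (ord k x)" using ord_set[OF x] e' nbrs_iff by blast
    have "Dv (run V w ord (Suc k) x) t \<le> Dv (run V w ord k y) t + ereal (w {y, x})"
      using fold_D_le_msg[OF yt] by simp
    also have "\<dots> \<le> ereal (wlen w (y # r)) + ereal (w {y, x})"
      using Suc.IH[OF wy] Suc.prems p Cons by (intro add_right_mono) simp
    also have "\<dots> = ereal (wlen w p)" using p Cons by (simp add: insert_commute)
    finally show ?thesis using p by simp
  qed
qed

lemma D_exact: "v \<in> V \<Longrightarrow> t \<in> V \<Longrightarrow> maxhop V E w v t \<le> k \<Longrightarrow>
   Dv (run V w ord k v) t = ereal (dist V E w v t)"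
proof -
  assume v: "v \<in> V" and t: "t \<in> V" and k: "maxhop V E w v t \<le> k"
  obtain p where p: "p \<in> shortest_paths V E w v t" using sp_ex[OF v t] by blast
  have "length p - 1 \<le> k" using sp_hop[OF p] k by simp
  moreover have "p \<noteq> []" "is_walk V E p" "hd p = v" "last p = t" "wlen w p = dist V E w v t"
    using p unfolding shortest_paths_def paths_between_def is_path_def by auto
  ultimately have "Dv (run V w ord k v) t \<le> ereal (dist V E w v t)"
    using D_upper[of p t k] by simp
  then show ?thesis using D_lower[OF t v, of k] by simp
qed

end

lemma fold_sub: "NHv (fold (process V w v) (map (msg_of \<sigma>) L) st) t \<subseteq> NHv st t \<union> fst ` set L \<and>
    PHv (fold (process V w v) (map (msg_of \<sigma>) L) st) t \<subseteq> PHv st t \<union> fst ` set L"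
proof (induction L arbitrary: st)
  case Nil then show ?case by simp
next
  case (Cons x L)
  obtain u t' where x: "x = (u,t')" by force
  have "NHv (process V w v (msg_of \<sigma> x) st) t \<subseteq> NHv st t \<union> {u}"
       "PHv (process V w v (msg_of \<sigma> x) st) t \<subseteq> PHv st t \<union> {u}"
    by (auto simp add: x msg_of_def proc_NH proc_PH)
  then show ?case using Cons[of "process V w v (msg_of \<sigma> x) st"] x by auto
qed

lemma (in G2) run_sub: "v \<in> V \<Longrightarrow> NHv (run V w ord k v) t \<subseteq> nbrs E v \<and> PHv (run V w ord k v) t \<subseteq> nbrs E v"
proof (induction k)
  case 0 then show ?case by (simp add: init_state_def)
next
  case (Suc k)
  have "fst ` set (ord k v) \<subseteq> nbrs E v" using ord_set[OF Suc.prems] by auto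
  moreover have "NHv (run V w ord (Suc k) v) t \<subseteq> NHv (run V w ord k v) t \<union> fst ` set (ord k v) \<and>
      PHv (run V w ord (Suc k) v) t \<subseteq> PHv (run V w ord k v) t \<union> fst ` set (ord k v)"
    using fold_sub[of V w v "run V w ord k" "ord k v" "run V w ord k v" t] by simp
  ultimately show ?case using Suc.IH[OF Suc.prems] by blast
qed

context G2 begin

lemma msgs_ge: "v \<in> V \<Longrightarrow> t \<in> V \<Longrightarrow> \<forall>(u, t')\<in>set (ord j v). t' = t \<longrightarrow>
      ereal (dist V E w v t) \<le> Dv (run V w ord j u) t + ereal (w {u, v})"
proof (intro ballI impI, clarify)
  fix u t' assume v: "v \<in> V" and t: "t \<in> V" and "(u, t) \<in> set (ord j v)"
  then have e: "{u, v} \<in> E" using ord_set[OF v] nbrs_iff by blast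
  then have u: "u \<in> V" using edge_V by blast
  have "ereal (dist V E w v t) \<le> ereal (dist V E w u t) + ereal (w {u, v})"
    using tri[OF e t] by simp
  also have "\<dots> \<le> Dv (run V w ord j u) t + ereal (w {u, v})"
    using D_lower[OF t u] by (rule add_right_mono)
  finally show "ereal (dist V E w v t) \<le> Dv (run V w ord j u) t + ereal (w {u, v})" .
qed

lemma key_nh:
  assumes v: "v \<in> V" and t: "t \<in> V" and j: "maxhop V E w v t \<le> j" and un: "u \<in> nbrs E v"
  shows "Dv (run V w ord j u) t + ereal (w {u, v}) = ereal (dist V E w v t) \<longleftrightarrow> u \<in> NHset V E w v t"
proof
  have e: "{u, v} \<in> E" using un nbrs_iff by blast
  then have u: "u \<in> V" using edge_V by blast
  assume h: "Dv (run V w ord j u) t + ereal (w {u, v}) = ereal (dist V E w v t)"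
  have lo: "ereal (dist V E w u t) \<le> Dv (run V w ord j u) t" using D_lower[OF t u] .
  have tr: "dist V E w v t \<le> w {u, v} + dist V E w u t" using tri[OF e t] .
  have "dist V E w u t + w {u, v} = dist V E w v t"
  proof (cases "Dv (run V w ord j u) t")
    case (real a)
    then show ?thesis using h lo tr by simp
  next
    case PInf then show ?thesis using h by simp
  next
    case MInf then show ?thesis using lo by simp
  qed
  then have "\<exists>r. v # u # r \<in> shortest_paths V E w v t" using nh_char[OF e t] by blast
  then show "u \<in> NHset V E w v t" unfolding NHset_def using un by blast
next
  have e: "{u, v} \<in> E" using un nbrs_iff by blast
  then have u: "u \<in> V" using edge_V by blast
  assume "u \<in> NHset V E w v t"
  then obtain r where sp: "v # u # r \<in> shortest_paths V E w v t" unfolding NHset_def by blast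
  note nt = nh_tail[OF sp]
  have "length (v # u # r) - 1 \<le> maxhop V E w v t" using sp_hop[OF sp] .
  then have len: "length (u # r) \<le> Suc j" using j by simp
  have "is_walk V E (u # r)" "last (u # r) = t"
    using nt(1) unfolding paths_between_def is_path_def by auto
  then have "Dv (run V w ord j u) t \<le> ereal (wlen w (u # r))"
    using D_upper[of "u # r" t j] len by simp
  then have "Dv (run V w ord j u) t = ereal (dist V E w u t)"
    using D_lower[OF t u, of j] nt(2) by simp
  then show "Dv (run V w ord j u) t + ereal (w {u, v}) = ereal (dist V E w v t)"
    using nt(3) by simp
qed

lemma key_ph:
  assumes v: "v \<in> V" and t: "t \<in> V" and j: "hopdiam V E w \<le> j" and un: "u \<in> nbrs E v"
  shows "(Dv (run V w ord j u) t + ereal (w {u, v}) \<noteq> ereal (dist V E w v t) \<and>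
          Dv (run V w ord j u) t - ereal (w {u, v}) = ereal (dist V E w v t))
     \<longleftrightarrow> u \<in> PHset V E w v t"
proof -
  have e: "{u, v} \<in> E" using un nbrs_iff by blast
  then have u: "u \<in> V" using edge_V by blast
  have wp: "w {u, v} > 0" using wpos e by blast
  have "maxhop V E w u t \<le> j" using maxhop_diam[OF u t] j by simp
  then have D: "Dv (run V w ord j u) t = ereal (dist V E w u t)" using D_exact[OF u t] by blast
  have "(Dv (run V w ord j u) t + ereal (w {u, v}) \<noteq> ereal (dist V E w v t) \<and>
          Dv (run V w ord j u) t - ereal (w {u, v}) = ereal (dist V E w v t))
     \<longleftrightarrow> dist V E w v t + w {u, v} = dist V E w u t"
    unfolding D using wp by auto
  also have "\<dots> \<longleftrightarrow> (\<exists>r. r @ [v, u] \<in> shortest_paths V E w t u)" using ph_char[OF e t] by simp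
  also have "\<dots> \<longleftrightarrow> u \<in> PHset V E w v t" unfolding PHset_def using un by blast
  finally show ?thesis .
qed

lemma NH_main:
  assumes v: "v \<in> V" and t: "t \<in> V" and k: "maxhop V E w v t + 1 \<le> k"
  shows "NHv (state_at V w ord k i v) t = NHset V E w v t"
proof -
  obtain k' where kk: "k = Suc k'" using k by (cases k) auto
  let ?d = "ereal (dist V E w v t)"
  have Dk': "Dv (run V w ord k' v) t = ?d" using D_exact[OF v t] k kk by simp
  note P1 = fold_phase[OF Dk' msgs_ge[OF v t, of k'], of V]
  have Dk: "Dv (run V w ord k v) t = ?d" using P1 kk by simp
  have U1: "{u. (u, t) \<in> set (ord k' v)} = nbrs E v" using ord_set[OF v] t by auto
  have sub: "NHset V E w v t \<subseteq> nbrs E v" unfolding NHset_def by blast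
  have A1: "{u. (u, t) \<in> set (ord k' v) \<and> Dv (run V w ord k' u) t + ereal (w {u, v}) = ?d}
      = NHset V E w v t"
    using key_nh[OF v t, of k'] k kk U1 sub by auto
  have NHk: "NHv (run V w ord k v) t = NHset V E w v t"
    using P1 kk U1 A1 sub run_sub[OF v, of k' t] by auto
  have ge2: "\<forall>(u, t')\<in>set (take i (ord k v)). t' = t \<longrightarrow>
      ?d \<le> Dv (run V w ord k u) t + ereal (w {u, v})"
    using msgs_ge[OF v t, of k] set_take_subset[of i "ord k v"] by blast
  note P2 = fold_phase[OF Dk ge2, of V]
  have U2: "{u. (u, t) \<in> set (take i (ord k v))} \<subseteq> nbrs E v"
    using ord_set[OF v] set_take_subset[of i "ord k v"] by blast
  have A2: "\<And>u. (u, t) \<in> set (take i (ord k v)) \<Longrightarrow>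
      (Dv (run V w ord k u) t + ereal (w {u, v}) = ?d) = (u \<in> NHset V E w v t)"
    using key_nh[OF v t, of k] k U2 by auto
  show ?thesis unfolding state_at_def using P2 NHk A2 by auto
qed

lemma PH_main:
  assumes v: "v \<in> V" and t: "t \<in> V" and k: "hopdiam V E w + 2 \<le> k"
  shows "PHv (state_at V w ord k i v) t = PHset V E w v t"
proof -
  obtain k' where kk: "k = Suc k'" using k by (cases k) auto
  let ?d = "ereal (dist V E w v t)"
  have "maxhop V E w v t \<le> k'" using maxhop_diam[OF v t] k kk by simp
  then have Dk': "Dv (run V w ord k' v) t = ?d" using D_exact[OF v t] by blast
  note P1 = fold_phase[OF Dk' msgs_ge[OF v t, of k'], of V]
  have Dk: "Dv (run V w ord k v) t = ?d" using P1 kk by simp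
  have U1: "{u. (u, t) \<in> set (ord k' v)} = nbrs E v" using ord_set[OF v] t by auto
  have sub: "PHset V E w v t \<subseteq> nbrs E v" unfolding PHset_def by blast
  have A1: "{u. (u, t) \<in> set (ord k' v) \<and> Dv (run V w ord k' u) t + ereal (w {u, v}) \<noteq> ?d
       \<and> Dv (run V w ord k' u) t - ereal (w {u, v}) = ?d}
      = PHset V E w v t"
    using key_ph[OF v t, of k'] k kk U1 sub by auto
  have PHk: "PHv (run V w ord k v) t = PHset V E w v t"
    using P1 kk U1 A1 sub run_sub[OF v, of k' t] by auto
  have ge2: "\<forall>(u, t')\<in>set (take i (ord k v)). t' = t \<longrightarrow>
      ?d \<le> Dv (run V w ord k u) t + ereal (w {u, v})"
    using msgs_ge[OF v t, of k] set_take_subset[of i "ord k v"] by blast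
  note P2 = fold_phase[OF Dk ge2, of V]
  have U2: "{u. (u, t) \<in> set (take i (ord k v))} \<subseteq> nbrs E v"
    using ord_set[OF v] set_take_subset[of i "ord k v"] by blast
  have A2: "\<And>u. (u, t) \<in> set (take i (ord k v)) \<Longrightarrow>
      (Dv (run V w ord k u) t + ereal (w {u, v}) \<noteq> ?d \<and> Dv (run V w ord k u) t - ereal (w {u, v}) = ?d)
       = (u \<in> PHset V E w v t)"
    using key_ph[OF v t, of k] k U2 by auto
  show ?thesis unfolding state_at_def using P2 PHk A2 by auto
qed

end

theorem lemma2:
  fixes V :: "'a set" and E :: "'a set set" and w :: "'a set \<Rightarrow> real"
    and ord :: "nat \<Rightarrow> 'a \<Rightarrow> ('a \<times> 'a) list"
  assumes "wf_graph V E"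
    and "connected_graph V E"
    and "\<forall>e\<in>E. w e > 0"
    and "valid_order V E ord"
  shows "\<forall>v\<in>V. \<forall>t\<in>V.
           (\<forall>k i. maxhop V E w v t + 1 \<le> k \<longrightarrow> i \<le> length (ord k v) \<longrightarrow>
                 NHv (state_at V w ord k i v) t = NHset V E w v t)
         \<and> (\<forall>k i. hopdiam V E w + 2 \<le> k \<longrightarrow> i \<le> length (ord k v) \<longrightarrow>
                 PHv (state_at V w ord k i v) t = PHset V E w v t)"
proof -
  interpret G2 V E w ord
    using assms by (unfold_locales) auto
  show ?thesis using NH_main PH_main by blast
qed

end
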